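(* $\mathcal{F}^{(n)}$ is coinitial in $\mathcal{F}_0^{(n)}$: for every $\mathbb{A}\in\mathcal{F}_0^{(n)}$ there exist $\mathbb{B}\in\mathcal{F}^{(n)}$ and an epimorphism $\mathbb{B}\to\mathbb{A}$.
   Context: Fix $m\in\mathbb{N}$, $n\ge0$. $\sigma=\{s_1,\dots,s_m\}$ binary relation symbols; $\sigma^{(n)}=\sigma\cup\{p_1,\dots,p_n\}$ with constant symbols. All structures here are finite. An epimorphism is a surjection $\phi$ with $\phi(s_i^{\mathbb{A}})=s_i^{\mathbb{B}}$ (componentwise images) and $\phi(p_j^{\mathbb{A}})=p_j^{\mathbb{B}}$. A binary relation $s$ on $A$ is surjective if for every $a$ there are $b,c$ with $(a,b),(c,a)\in s$; $a$ is outgoing for $s$ if $|\{b:(b,a)\in s\}|=1$ and $|\{b:(a,b)\in s\}|\ge2$. $\mathcal{F}_0$: finite $\sigma$-structures with all $s_i$ surjective. $\mathcal{F}$: members of $\mathcal{F}_0$ where (i) every point is outgoing for exactly one of $s_1,s_1^{-1},\dots,s_m,s_m^{-1}$, (ii) if $(a,b)\in s_i$ then $a$ is $s_i$-outgoing or $b$ is $s_i^{-1}$-outgoing. $\mathcal{F}_0^{(n)}$: finite $\sigma^{(n)}$-structures whose $\sigma$-reduct lies in $\mathcal{F}_0$ and with $(p_j,p_j)\in s_i$ for all $i\in[m]$, $j\in[n]$. For $\mathbb{A}\in\mathcal{F}$, $\mathbb{A}^{(n)}$ has universe $A\sqcup[n]$, $s_i^{\mathbb{A}^{(n)}}=s_i^{\mathbb{A}}\cup\{(j,j):j\in[n]\}$,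 $p_j^{\mathbb{A}^{(n)}}=j$; $\mathcal{F}^{(n)}=\{\mathbb{A}^{(n)}:\mathbb{A}\in\mathcal{F}\}$. *)

theory Defs
  imports Main
begin

text \<open>A sigma-structure has a universe and binary relations
  rel i for i in {1..m}; a sigma^(n)-structure additionally has constants cst j for
  j in {1..n}. Values of rel / cst at indices outside these ranges are irrelevant.\<close>

record 'a sig_str =
  univ :: "'a set"
  rel  :: "nat \<Rightarrow> ('a \<times> 'a) set"

record 'a sign_str = "'a sig_str" +
  cst :: "nat \<Rightarrow> 'a"

definition fin_sig_str :: "nat \<Rightarrow> ('a, 'b) sig_str_scheme \<Rightarrow> bool" where
  "fin_sig_str m A \<longleftrightarrow> finite (univ A) \<and> (\<forall>i\<in>{1..m}. rel A i \<subseteq> univ A \<times> univ A)"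

definition surjective_rel :: "'a set \<Rightarrow> ('a \<times> 'a) set \<Rightarrow> bool" where
  "surjective_rel X s \<longleftrightarrow> (\<forall>a\<in>X. \<exists>b c. (a, b) \<in> s \<and> (c, a) \<in> s)"

definition outgoing :: "('a \<times> 'a) set \<Rightarrow> 'a \<Rightarrow> bool" where
  "outgoing s a \<longleftrightarrow> card {b. (b, a) \<in> s} = 1 \<and> card {b. (a, b) \<in> s} \<ge> 2"

definition dir_rel :: "bool \<Rightarrow> ('a \<times> 'a) set \<Rightarrow> ('a \<times> 'a) set" where
  "dir_rel d s = (if d then s else converse s)"

definition F0 :: "nat \<Rightarrow> ('a, 'b) sig_str_scheme \<Rightarrow> bool" where
  "F0 m A \<longleftrightarrow> fin_sig_str m A \<and> (\<forall>i\<in>{1..m}. surjective_rel (univ A) (rel A i))"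

definition Fcal :: "nat \<Rightarrow> ('a, 'b) sig_str_scheme \<Rightarrow> bool" where
  "Fcal m A \<longleftrightarrow> F0 m A
     \<and> (\<forall>a\<in>univ A. card {(i, d). i \<in> {1..m} \<and> outgoing (dir_rel d (rel A i)) a} = 1)
     \<and> (\<forall>i\<in>{1..m}. \<forall>a b. (a, b) \<in> rel A i \<longrightarrow>
          outgoing (rel A i) a \<or> outgoing (converse (rel A i)) b)"

definition F0n :: "nat \<Rightarrow> nat \<Rightarrow> 'a sign_str \<Rightarrow> bool" where
  "F0n m n A \<longleftrightarrow> F0 m A \<and> (\<forall>j\<in>{1..n}. cst A j \<in> univ A)
     \<and> (\<forall>i\<in>{1..m}. \<forall>j\<in>{1..n}. (cst A j, cst A j) \<in> rel A i)"

text \<open>A^(n): universe A disjoint-union [n] (Inl / Inr), loops at the new points, p_j = j.\<close>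
definition ext_n :: "nat \<Rightarrow> 'b sig_str \<Rightarrow> ('b + nat) sign_str" where
  "ext_n n A = \<lparr> univ = Inl ` univ A \<union> Inr ` {1..n},
     rel = (\<lambda>i. map_prod Inl Inl ` rel A i \<union> (\<lambda>j. (Inr j, Inr j)) ` {1..n}),
     cst = (\<lambda>j. Inr j) \<rparr>"

definition epi :: "nat \<Rightarrow> nat \<Rightarrow> ('a \<Rightarrow> 'c) \<Rightarrow> 'a sign_str \<Rightarrow> 'c sign_str \<Rightarrow> bool" where
  "epi m n \<phi> A B \<longleftrightarrow> \<phi> ` univ A = univ B
     \<and> (\<forall>i\<in>{1..m}. map_prod \<phi> \<phi> ` rel A i = rel B i)
     \<and> (\<forall>j\<in>{1..n}. \<phi> (cst A j) = cst B j)"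

end

theory Submission imports Defs "HOL-Library.Countable" begin

locale cons =
  fixes m :: nat and X :: "'x set" and R :: "nat \<Rightarrow> ('x\<times>'x) set" and p q :: "nat \<Rightarrow> 'x \<Rightarrow> 'x"
  assumes finX: "finite X"
  and RX: "\<And>j. j\<in>{1..m} \<Longrightarrow> R j \<subseteq> X \<times> X"
  and pX: "\<And>j x. j\<in>{1..m} \<Longrightarrow> x\<in>X \<Longrightarrow> (p j x, x) \<in> R j"
  and qX: "\<And>j x. j\<in>{1..m} \<Longrightarrow> x\<in>X \<Longrightarrow> (x, q j x) \<in> R j"
begin

definition V :: "(nat\<times>bool\<times>'x\<times>bool) set" where "V = {1..m} \<times> (UNIV::bool set) \<times> X \<times> (UNIV::bool set)"

definition E :: "nat \<Rightarrow> ((nat\<times>bool\<times>'x\<times>bool)\<times>(nat\<times>bool\<times>'x\<times>bool)) set" where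
"E j = {((i1,d1,y1,k1),(i2,d2,y2,k2)).
    (i1=j \<and> d1 \<and> i2=j \<and> d2 \<and> y2\<in>X \<and> y1 = p j y2 \<and> k1=k2)
  \<or> (i1=j \<and> \<not>d1 \<and> i2=j \<and> \<not>d2 \<and> y1\<in>X \<and> y2 = q j y1 \<and> k1=k2)
  \<or> (i1=j \<and> d1 \<and> i2=j \<and> \<not>d2 \<and> (y1,y2)\<in>R j)
  \<or> (i1=j \<and> d1 \<and> y1 = p j y2 \<and> k1 \<and> i2\<in>{1..m} \<and> i2\<noteq>j \<and> y2\<in>X)
  \<or> (i2=j \<and> \<not>d2 \<and> y2 = q j y1 \<and> k2 \<and> i1\<in>{1..m} \<and> i1\<noteq>j \<and> y1\<in>X)}"

lemma memE: "((i1,d1,y1,k1),(i2,d2,y2,k2)) \<in> E j \<longleftrightarrow>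
    (i1=j \<and> d1 \<and> i2=j \<and> d2 \<and> y2\<in>X \<and> y1 = p j y2 \<and> k1=k2)
  \<or> (i1=j \<and> \<not>d1 \<and> i2=j \<and> \<not>d2 \<and> y1\<in>X \<and> y2 = q j y1 \<and> k1=k2)
  \<or> (i1=j \<and> d1 \<and> i2=j \<and> \<not>d2 \<and> (y1,y2)\<in>R j)
  \<or> (i1=j \<and> d1 \<and> y1 = p j y2 \<and> k1 \<and> i2\<in>{1..m} \<and> i2\<noteq>j \<and> y2\<in>X)
  \<or> (i2=j \<and> \<not>d2 \<and> y2 = q j y1 \<and> k2 \<and> i1\<in>{1..m} \<and> i1\<noteq>j \<and> y1\<in>X)"
  unfolding E_def by simp

lemma pX': "j\<in>{1..m} \<Longrightarrow> x\<in>X \<Longrightarrow> p j x \<in> X" using pX RX by blast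
lemma qX': "j\<in>{1..m} \<Longrightarrow> x\<in>X \<Longrightarrow> q j x \<in> X" using qX RX by blast

lemma finV: "finite V" unfolding V_def using finX by simp

lemma E_sub: assumes "j\<in>{1..m}" shows "E j \<subseteq> V \<times> V"
proof (rule subrelI)
  fix a b assume ab: "(a,b) \<in> E j"
  obtain i1 d1 y1 k1 i2 d2 y2 k2 where t: "a = (i1,d1,y1,k1)" "b = (i2,d2,y2,k2)" by (cases a, cases b) auto
  show "(a,b) \<in> V \<times> V" using ab assms pX'[OF assms] qX'[OF assms] RX[OF assms] unfolding t
    by (auto simp: memE V_def)
qed

lemma memTF: "(x,z)\<in>R j \<Longrightarrow> ((j,True,x,k),(j,False,z,l)) \<in> E j"
  by (simp add: memE)

lemma in_T: "j\<in>{1..m} \<Longrightarrow> x\<in>X \<Longrightarrow> {b. (b,(j,True,x,k))\<in>E j} = {(j,True,p j x,k)}"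
  by (auto simp: memE)
lemma out_F: "j\<in>{1..m} \<Longrightarrow> y\<in>X \<Longrightarrow> {b. ((j,False,y,k),b)\<in>E j} = {(j,False,q j y,k)}"
  by (auto simp: memE)
lemma in_O: "j\<in>{1..m} \<Longrightarrow> i\<in>{1..m} \<Longrightarrow> i\<noteq>j \<Longrightarrow> y\<in>X \<Longrightarrow> {b. (b,(i,d,y,k))\<in>E j} = {(j,True,p j y,True)}"
  by (auto simp: memE)
lemma out_O: "j\<in>{1..m} \<Longrightarrow> i\<in>{1..m} \<Longrightarrow> i\<noteq>j \<Longrightarrow> y\<in>X \<Longrightarrow> {b. ((i,d,y,k),b)\<in>E j} = {(j,False,q j y,True)}"
  by (auto simp: memE)

lemma out_T: assumes "j\<in>{1..m}" "x\<in>X" shows "2 \<le> card {b. ((j,True,x,k),b)\<in>E j}"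
proof -
  have sub: "{(j,False,q j x,True),(j,False,q j x,False)} \<subseteq> {b. ((j,True,x,k),b)\<in>E j}"
    using qX[OF assms] by (simp add: memE)
  have fin: "finite {b. ((j,True,x,k),b)\<in>E j}"
    by (rule finite_subset[OF _ finV]) (use E_sub[OF assms(1)] in auto)
  show ?thesis using card_mono[OF fin sub] by simp
qed
lemma in_F: assumes "j\<in>{1..m}" "y\<in>X" shows "2 \<le> card {b. (b,(j,False,y,k))\<in>E j}"
proof -
  have sub: "{(j,True,p j y,True),(j,True,p j y,False)} \<subseteq> {b. (b,(j,False,y,k))\<in>E j}"
    using pX[OF assms] by (simp add: memE)
  have fin: "finite {b. (b,(j,False,y,k))\<in>E j}"
    by (rule finite_subset[OF _ finV]) (use E_sub[OF assms(1)] in auto)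
  show ?thesis using card_mono[OF fin sub] by simp
qed

lemma outg: assumes j: "j\<in>{1..m}" and v: "v\<in>V"
  shows "outgoing (dir_rel d' (E j)) v \<longleftrightarrow> (fst v = j \<and> fst (snd v) = d')"
proof -
  obtain i d y k where vv: "v = (i,d,y,k)" by (cases v) auto
  have i: "i\<in>{1..m}" and y: "y\<in>X" using v vv V_def by auto
  show ?thesis
  proof (cases "i = j")
    case True
    show ?thesis
    proof (cases d)
      case True
      then show ?thesis using in_T[OF j y] out_T[OF j y] \<open>i=j\<close> vv
        by (cases d') (auto simp: outgoing_def dir_rel_def)
    next
      case False
      then show ?thesis using out_F[OF j y] in_F[OF j y] \<open>i=j\<close> vv
        by (cases d') (auto simp: outgoing_def dir_rel_def)
    qed
  next
    case False
    then show ?thesis using in_O[OF j i False y] out_O[OF j i False y] vv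
      by (cases d') (auto simp: outgoing_def dir_rel_def)
  qed
qed

lemma Fcal_B0: "Fcal m \<lparr>univ = V, rel = E\<rparr>"
proof -
  have fin: "fin_sig_str m \<lparr>univ = V, rel = E\<rparr>" using finV E_sub by (simp add: fin_sig_str_def)
  have surj: "surjective_rel V (E j)" if j: "j\<in>{1..m}" for j
    unfolding surjective_rel_def
  proof
    fix v assume v: "v\<in>V"
    obtain i d y k where vv: "v = (i,d,y,k)" by (cases v) auto
    have i: "i\<in>{1..m}" and y: "y\<in>X" using v vv V_def by auto
    show "\<exists>b c. (v, b) \<in> E j \<and> (c, v) \<in> E j"
    proof (cases "i = j")
      case True
      show ?thesis
      proof (cases d)
        case True
        have m1: "((j,True,y,k),(j,False,q j y,True)) \<in> E j" by (rule memTF[OF qX[OF j y]])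
        have "(j,True,p j y,k) \<in> {b. (b,(j,True,y,k))\<in>E j}" using in_T[OF j y, of k] by simp
        then have m2: "((j,True,p j y,k),(j,True,y,k)) \<in> E j" by simp
        show ?thesis unfolding vv using m1 m2 True \<open>i=j\<close> by auto
      next
        case False
        have m1: "((j,True,p j y,True),(j,False,y,k)) \<in> E j" by (rule memTF[OF pX[OF j y]])
        have "(j,False,q j y,k) \<in> {b. ((j,False,y,k),b)\<in>E j}" using out_F[OF j y, of k] by simp
        then have m2: "((j,False,y,k),(j,False,q j y,k)) \<in> E j" by simp
        show ?thesis unfolding vv using m1 m2 False \<open>i=j\<close> by auto
      qed
    next
      case False
      then show ?thesis using in_O[OF j i False y, of d k] out_O[OF j i False y, of d k] vv by blast
    qed
  qed
  have types: "card {(i', d'). i' \<in> {1..m} \<and> outgoing (dir_rel d' (E i')) v} = 1" if v: "v\<in>V" for v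
  proof -
    have "{(i', d'). i' \<in> {1..m} \<and> outgoing (dir_rel d' (E i')) v} = {(fst v, fst (snd v))}"
    proof -
      have fv: "fst v \<in> {1..m}" using v V_def by (auto simp: mem_Times_iff)
      show ?thesis
      proof (rule set_eqI)
        fix x :: "nat \<times> bool"
        obtain a b where x: "x = (a,b)" by (cases x)
        have "x \<in> {(i', d'). i' \<in> {1..m} \<and> outgoing (dir_rel d' (E i')) v} \<longleftrightarrow> a \<in> {1..m} \<and> outgoing (dir_rel b (E a)) v"
          unfolding x by simp
        also have "\<dots> \<longleftrightarrow> a = fst v \<and> b = fst (snd v)" using outg[OF _ v, of a b] fv by blast
        also have "\<dots> \<longleftrightarrow> x \<in> {(fst v, fst (snd v))}" unfolding x by auto
        finally show "x \<in> {(i', d'). i' \<in> {1..m} \<and> outgoing (dir_rel d' (E i')) v} \<longleftrightarrow> x \<in> {(fst v, fst (snd v))}" .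
      qed
    qed
    then show ?thesis by simp
  qed
  have ii: "outgoing (E i) a \<or> outgoing (converse (E i)) b" if i: "i\<in>{1..m}" and ab: "(a,b)\<in>E i" for i a b
  proof -
    have a: "a\<in>V" and b: "b\<in>V" using E_sub[OF i] ab by auto
    have "(fst a = i \<and> fst (snd a) = True) \<or> (fst b = i \<and> fst (snd b) = False)"
    proof -
      obtain i1 d1 y1 k1 i2 d2 y2 k2 where t: "a = (i1,d1,y1,k1)" "b = (i2,d2,y2,k2)" by (cases a, cases b) auto
      show ?thesis using ab unfolding t by (auto simp: memE)
    qed
    then show ?thesis using outg[OF i a, of True] outg[OF i b, of False] by (auto simp: dir_rel_def)
  qed
  show ?thesis unfolding Fcal_def F0_def sig_str.select_convs using fin surj types ii by blast
qed

end


lemma set_ren1: assumes g: "inj_on g U" and S: "S \<subseteq> U\<times>U" and a: "a\<in>U"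
  shows "{b. (b, g a) \<in> map_prod g g ` S} = g ` {b. (b,a)\<in>S}"
proof (rule set_eqI, rule iffI)
  fix b assume "b \<in> {b. (b, g a) \<in> map_prod g g ` S}"
  then obtain x y where xy: "(x,y)\<in>S" "b = g x" "g a = g y" by auto
  have "y\<in>U" using xy S by auto
  then have "y = a" using inj_onD[OF g xy(3) a] by simp
  then show "b \<in> g ` {b. (b,a)\<in>S}" using xy by auto
next
  fix b assume "b \<in> g ` {b. (b,a)\<in>S}"
  then show "b \<in> {b. (b, g a) \<in> map_prod g g ` S}" by (auto intro: map_prod_imageI)
qed

lemma set_ren: assumes g: "inj_on g U" and S: "S \<subseteq> U\<times>U" and a: "a\<in>U"
  shows "{b. (b, g a) \<in> map_prod g g ` S} = g ` {b. (b,a)\<in>S} \<and> {b. (g a, b) \<in> map_prod g g ` S} = g ` {b. (a,b)\<in>S}"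
proof
  show "{b. (b, g a) \<in> map_prod g g ` S} = g ` {b. (b,a)\<in>S}" by (rule set_ren1[OF g S a])
  have S': "converse S \<subseteq> U\<times>U" using S by auto
  have "{b. (b, g a) \<in> map_prod g g ` converse S} = g ` {b. (b,a)\<in>converse S}" by (rule set_ren1[OF g S' a])
  moreover have "map_prod g g ` converse S = converse (map_prod g g ` S)" by auto
  ultimately show "{b. (g a, b) \<in> map_prod g g ` S} = g ` {b. (a,b)\<in>S}" by simp
qed

lemma outg_ren: assumes g: "inj_on g U" and S: "S \<subseteq> U\<times>U" and a: "a\<in>U"
  shows "outgoing (map_prod g g ` S) (g a) \<longleftrightarrow> outgoing S a"
proof -
  have "card (g ` {b. (b,a)\<in>S}) = card {b. (b,a)\<in>S}"
    by (rule card_image, rule inj_on_subset[OF g]) (use S in auto)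
  moreover have "card (g ` {b. (a,b)\<in>S}) = card {b. (a,b)\<in>S}"
    by (rule card_image, rule inj_on_subset[OF g]) (use S in auto)
  ultimately show ?thesis using set_ren[OF g S a] by (simp add: outgoing_def)
qed

lemma dir_ren: "dir_rel d (map_prod g g ` S) = map_prod g g ` dir_rel d S"
  by (auto simp: dir_rel_def)

lemma dir_sub: "S \<subseteq> U\<times>U \<Longrightarrow> dir_rel d S \<subseteq> U\<times>U"
  by (auto simp: dir_rel_def)

lemma Fcal_ren: assumes g: "inj_on g (univ B)" and F: "Fcal m B"
  shows "Fcal m \<lparr>univ = g ` univ B, rel = \<lambda>i. map_prod g g ` rel B i\<rparr>"
proof -
  let ?U = "univ B"
  have sub: "\<And>i. i\<in>{1..m} \<Longrightarrow> rel B i \<subseteq> ?U \<times> ?U" using F by (simp add: Fcal_def F0_def fin_sig_str_def)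
  have fin: "finite ?U" using F by (simp add: Fcal_def F0_def fin_sig_str_def)
  have surj: "\<And>i. i\<in>{1..m} \<Longrightarrow> surjective_rel ?U (rel B i)" using F by (simp add: Fcal_def F0_def)
  have ty: "\<And>a. a\<in>?U \<Longrightarrow> card {(i, d). i \<in> {1..m} \<and> outgoing (dir_rel d (rel B i)) a} = 1"
    using F by (simp add: Fcal_def)
  have ii: "\<And>i a b. i\<in>{1..m} \<Longrightarrow> (a,b)\<in>rel B i \<Longrightarrow> outgoing (rel B i) a \<or> outgoing (converse (rel B i)) b"
    using F by (simp add: Fcal_def)
  have o: "\<And>i d a. i\<in>{1..m} \<Longrightarrow> a\<in>?U \<Longrightarrow> outgoing (dir_rel d (map_prod g g ` rel B i)) (g a) \<longleftrightarrow> outgoing (dir_rel d (rel B i)) a"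
    using outg_ren[OF g dir_sub[OF sub]] dir_ren by metis
  have A1: "fin_sig_str m \<lparr>univ = g ` ?U, rel = \<lambda>i. map_prod g g ` rel B i\<rparr>"
    using fin sub by (fastforce simp: fin_sig_str_def)
  have A2: "surjective_rel (g ` ?U) (map_prod g g ` rel B i)" if i: "i\<in>{1..m}" for i
    unfolding surjective_rel_def
  proof
    fix a' assume "a' \<in> g ` ?U"
    then obtain a where a: "a\<in>?U" "a' = g a" by auto
    then obtain b c where "(a,b)\<in>rel B i" "(c,a)\<in>rel B i" using surj[OF i] unfolding surjective_rel_def by blast
    then show "\<exists>b c. (a', b) \<in> map_prod g g ` rel B i \<and> (c, a') \<in> map_prod g g ` rel B i"
      using a by (metis map_prod_imageI)
  qed
  have A3: "card {(i, d). i \<in> {1..m} \<and> outgoing (dir_rel d (map_prod g g ` rel B i)) a'} = 1"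
    if a'U: "a' \<in> g ` ?U" for a'
  proof -
    obtain a where a: "a\<in>?U" "a' = g a" using a'U by auto
    have "{(i, d). i \<in> {1..m} \<and> outgoing (dir_rel d (map_prod g g ` rel B i)) a'}
        = {(i, d). i \<in> {1..m} \<and> outgoing (dir_rel d (rel B i)) a}"
      using o a by auto
    then show ?thesis using ty[OF a(1)] by simp
  qed
  have A4: "outgoing (map_prod g g ` rel B i) a' \<or> outgoing (converse (map_prod g g ` rel B i)) b'"
    if i: "i\<in>{1..m}" and ab: "(a',b') \<in> map_prod g g ` rel B i" for i a' b'
  proof -
    obtain a b where ab': "(a,b)\<in>rel B i" "a' = g a" "b' = g b" using ab by auto
    have aU: "a\<in>?U" and bU: "b\<in>?U" using sub[OF i] ab' by auto
    have e1: "outgoing (map_prod g g ` rel B i) (g a) \<longleftrightarrow> outgoing (rel B i) a"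
      using o[OF i aU, of True] by (simp add: dir_rel_def)
    have e2: "outgoing (converse (map_prod g g ` rel B i)) (g b) \<longleftrightarrow> outgoing (converse (rel B i)) b"
      using o[OF i bU, of False] by (simp add: dir_rel_def)
    show ?thesis using ii[OF i ab'(1)] e1 e2 ab'(2,3) by blast
  qed
  show ?thesis unfolding Fcal_def F0_def sig_str.select_convs using A1 A2 A3 A4 by blast
qed

theorem lemma3p3:
  fixes m n :: nat and A :: "'a sign_str"
  assumes "m \<ge> 1"
    and "F0n m n A"
  shows "\<exists>(B :: nat sig_str) (\<phi> :: nat + nat \<Rightarrow> 'a). Fcal m B \<and> epi m n \<phi> (ext_n n B) A"
proof -
  define X where "X = univ A"
  define R where "R = rel A"
  have finX: "finite X" and RX: "\<And>j. j\<in>{1..m} \<Longrightarrow> R j \<subseteq> X \<times> X"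
    and surj: "\<And>j. j\<in>{1..m} \<Longrightarrow> surjective_rel X (R j)"
    and cX: "\<And>j. j\<in>{1..n} \<Longrightarrow> cst A j \<in> X"
    and cl: "\<And>i j. i\<in>{1..m} \<Longrightarrow> j\<in>{1..n} \<Longrightarrow> (cst A j, cst A j) \<in> R i"
    using assms(2) unfolding X_def R_def F0n_def F0_def fin_sig_str_def by auto
  define p where "p = (\<lambda>j x. SOME y. (y,x) \<in> R j)"
  define q where "q = (\<lambda>j x. SOME y. (x,y) \<in> R j)"
  interpret c: cons m X R p q
  proof
    show "finite X" by fact
    show "\<And>j. j\<in>{1..m} \<Longrightarrow> R j \<subseteq> X \<times> X" by fact
    fix j x assume j: "j\<in>{1..m}" and x: "x\<in>X"
    obtain b c where "(x,b)\<in>R j" "(c,x)\<in>R j" using surj[OF j] x unfolding surjective_rel_def by blast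
    then show "(p j x, x) \<in> R j" "(x, q j x) \<in> R j" unfolding p_def q_def by (metis someI_ex)+
  qed
  obtain g0 :: "'a \<Rightarrow> nat" and N where g0: "inj_on g0 X" using finite_imp_inj_to_nat_seg[OF finX] by blast
  define g :: "nat\<times>bool\<times>'a\<times>bool \<Rightarrow> nat" where
    "g = (\<lambda>v. to_nat (fst v, fst (snd v), g0 (fst (snd (snd v))), snd (snd (snd v))))"
  have ginj: "inj_on g c.V"
  proof (rule inj_onI)
    fix v w assume v: "v \<in> c.V" and w: "w \<in> c.V" and e: "g v = g w"
    obtain i1 d1 y1 k1 i2 d2 y2 k2 where t: "v = (i1,d1,y1,k1)" "w = (i2,d2,y2,k2)" by (cases v, cases w) auto
    have y: "y1 \<in> X" "y2 \<in> X" using v w t c.V_def by auto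
    have "i1 = i2 \<and> d1 = d2 \<and> g0 y1 = g0 y2 \<and> k1 = k2" using e unfolding t g_def by simp
    moreover then have "y1 = y2" using inj_onD[OF g0 _ y] by blast
    ultimately show "v = w" unfolding t by simp
  qed
  define B :: "nat sig_str" where "B = \<lparr>univ = g ` c.V, rel = \<lambda>i. map_prod g g ` c.E i\<rparr>"
  have FB: "Fcal m B" unfolding B_def using Fcal_ren[OF _ c.Fcal_B0, of g] ginj by simp
  define \<pi> :: "nat\<times>bool\<times>'a\<times>bool \<Rightarrow> 'a" where "\<pi> = (\<lambda>v. fst (snd (snd v)))"
  define \<phi> :: "nat + nat \<Rightarrow> 'a" where
    "\<phi> = case_sum (\<lambda>z. inv_into X g0 (fst (snd (snd (from_nat z :: nat\<times>bool\<times>nat\<times>bool))))) (cst A)"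
  have phig: "\<phi> (Inl (g v)) = \<pi> v" if "v \<in> c.V" for v
  proof -
    obtain i d y k where t: "v = (i,d,y,k)" by (cases v) auto
    have y: "y \<in> X" using that t c.V_def by auto
    show ?thesis unfolding t \<phi>_def g_def \<pi>_def using inv_into_f_f[OF g0 y] by simp
  qed
  have piV: "\<pi> ` c.V = X"
  proof
    show "\<pi> ` c.V \<subseteq> X" unfolding \<pi>_def c.V_def by auto
    show "X \<subseteq> \<pi> ` c.V"
    proof
      fix x assume "x\<in>X"
      then have "(1,True,x,True) \<in> c.V" using assms(1) unfolding c.V_def by auto
      then show "x \<in> \<pi> ` c.V" unfolding \<pi>_def by force
    qed
  qed
  have piE: "map_prod \<pi> \<pi> ` c.E i = R i" if i: "i\<in>{1..m}" for i
  proof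
    show "map_prod \<pi> \<pi> ` c.E i \<subseteq> R i"
    proof (rule subsetI)
      fix e assume "e \<in> map_prod \<pi> \<pi> ` c.E i"
      then obtain a b where ab: "(a,b) \<in> c.E i" "e = (\<pi> a, \<pi> b)" by auto
      obtain i1 d1 y1 k1 i2 d2 y2 k2 where t: "a = (i1,d1,y1,k1)" "b = (i2,d2,y2,k2)" by (cases a, cases b) auto
      show "e \<in> R i" using ab c.pX[OF i] c.qX[OF i] unfolding t \<pi>_def by (auto simp: c.memE)
    qed
    show "R i \<subseteq> map_prod \<pi> \<pi> ` c.E i"
    proof
      fix e assume "e \<in> R i"
      then obtain x y where e: "e = (x,y)" "(x,y)\<in>R i" by (cases e) auto
      then have "((i,True,x,True),(i,False,y,True)) \<in> c.E i" by (simp add: c.memE)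
      then show "e \<in> map_prod \<pi> \<pi> ` c.E i" unfolding \<pi>_def e
        by (metis (no_types, lifting) fst_conv map_prod_imageI snd_conv)
    qed
  qed
  have "epi m n \<phi> (ext_n n B) A"
    unfolding epi_def
  proof (intro conjI ballI)
    have "\<phi> ` univ (ext_n n B) = \<phi> ` Inl ` g ` c.V \<union> \<phi> ` Inr ` {1..n}"
      by (simp add: ext_n_def B_def image_Un)
    also have "\<phi> ` Inl ` g ` c.V = \<pi> ` c.V" using phig by (force simp: image_iff)
    also have "\<phi> ` Inr ` {1..n} = cst A ` {1..n}" by (force simp: \<phi>_def)
    finally show "\<phi> ` univ (ext_n n B) = univ A" using piV cX X_def by auto
  next
    fix i assume i: "i\<in>{1..m}"
    have "map_prod \<phi> \<phi> ` rel (ext_n n B) i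
      = map_prod \<phi> \<phi> ` map_prod Inl Inl ` map_prod g g ` c.E i \<union> map_prod \<phi> \<phi> ` (\<lambda>j. (Inr j, Inr j)) ` {1..n}"
      by (simp add: ext_n_def B_def image_Un)
    also have "map_prod \<phi> \<phi> ` map_prod Inl Inl ` map_prod g g ` c.E i = map_prod \<pi> \<pi> ` c.E i"
    proof -
      have "\<And>e. e \<in> c.E i \<Longrightarrow> map_prod \<phi> \<phi> (map_prod Inl Inl (map_prod g g e)) = map_prod \<pi> \<pi> e"
        using c.E_sub[OF i] phig by auto
      then show ?thesis by (simp add: image_image cong: image_cong)
    qed
    also have "map_prod \<phi> \<phi> ` (\<lambda>j. (Inr j, Inr j)) ` {1..n} = (\<lambda>j. (cst A j, cst A j)) ` {1..n}"
      by (force simp: \<phi>_def)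
    finally show "map_prod \<phi> \<phi> ` rel (ext_n n B) i = rel A i"
      using piE[OF i] cl[OF i] R_def by auto
  next
    fix j assume "j\<in>{1..n}"
    show "\<phi> (cst (ext_n n B) j) = cst A j" by (simp add: ext_n_def \<phi>_def)
  qed
  then show ?thesis using FB by blast
qed

end
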